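(* Let $r\in\{0,1\}$. If a vector $(x_\alpha,\dots,x_1)$ is $r$-realizable, then every vector $(y_\alpha,\dots,y_1)$ with $x_i\le y_i$ for all $1\le i\le\alpha$ is $r$-realizable.
   Context: All graphs are finite, nonempty, and reflexive (every vertex has a loop). $N[v]$ is the closed neighborhood of $v$ (including $v$). For distinct $v,w$, $w$ strictly corners $v$ if $N[v]\subsetneq N[w]$; $v$ is then a strict corner. A vertex dominates a set if adjacent to all its vertices. Corner ranking: set $G^{(1)}=G$, $k=1$. If $G^{(k)}$ is a clique, give all its vertices rank $k$ and stop. Else if $G^{(k)}$ has no strict corners, give all its vertices rank $\infty$ and stop. Else give every strict corner of $G^{(k)}$ rank $k$, delete them to get $G^{(k+1)}$ (induced subgraph), increase $k$ and repeat. The corner rank is the largest rank of a vertex; $X_k$ is the set of rank-$k$ vertices. A graph is cop-win iff its corner rank is finite. A graph of finite corner rank $\alpha\ge2$ is of type 1 if some (equivalently every) vertex of rank $\alpha$ dominates $V(G^{(\alpha-1)})$, and of type 0 otherwise. A vector is a finite list of positive integers. The rank cardinality vector is $(x_\alpha,\dots,x_1)$ with $x_k=|X_k|$. A vector is $r$-realizable if it is the rank cardinality vector of some cop-win graph of type $r$. *)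

theory Defs
  imports Main
begin

definition is_graph :: "'a set \<Rightarrow> ('a \<Rightarrow> 'a \<Rightarrow> bool) \<Rightarrow> bool" where
  "is_graph V E \<longleftrightarrow> finite V \<and> V \<noteq> {} \<and> (\<forall>v\<in>V. E v v)
     \<and> (\<forall>v\<in>V. \<forall>w\<in>V. E v w \<longrightarrow> E w v)"

definition cnbh :: "('a \<Rightarrow> 'a \<Rightarrow> bool) \<Rightarrow> 'a set \<Rightarrow> 'a \<Rightarrow> 'a set" where
  "cnbh E S v = {w \<in> S. E v w}"

definition strict_corner :: "('a \<Rightarrow> 'a \<Rightarrow> bool) \<Rightarrow> 'a set \<Rightarrow> 'a \<Rightarrow> bool" where
  "strict_corner E S v \<longleftrightarrow> v \<in> S \<and> (\<exists>w\<in>S. w \<noteq> v \<and> cnbh E S v \<subset> cnbh E S w)"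

definition is_clique :: "('a \<Rightarrow> 'a \<Rightarrow> bool) \<Rightarrow> 'a set \<Rightarrow> bool" where
  "is_clique E S \<longleftrightarrow> (\<forall>v\<in>S. \<forall>w\<in>S. E v w)"

text \<open>stage E V k is the vertex set of G^(k+1) (once G^(k) is a clique, the
  later stages are empty).\<close>
primrec stage :: "('a \<Rightarrow> 'a \<Rightarrow> bool) \<Rightarrow> 'a set \<Rightarrow> nat \<Rightarrow> 'a set" where
  "stage E V 0 = V"
| "stage E V (Suc k) = (if is_clique E (stage E V k) then {}
      else stage E V k - {v. strict_corner E (stage E V k) v})"

definition rank_set :: "('a \<Rightarrow> 'a \<Rightarrow> bool) \<Rightarrow> 'a set \<Rightarrow> nat \<Rightarrow> 'a set" where
  "rank_set E V k = (if k = 0 then {} else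
     {v \<in> stage E V (k - 1). is_clique E (stage E V (k - 1)) \<or> strict_corner E (stage E V (k - 1)) v})"

definition finite_corner_rank :: "'a set \<Rightarrow> ('a \<Rightarrow> 'a \<Rightarrow> bool) \<Rightarrow> bool" where
  "finite_corner_rank V E \<longleftrightarrow> (\<exists>k. stage E V k = {})"

definition corner_rank :: "'a set \<Rightarrow> ('a \<Rightarrow> 'a \<Rightarrow> bool) \<Rightarrow> nat" where
  "corner_rank V E = Max {k. rank_set E V k \<noteq> {}}"

definition type1 :: "'a set \<Rightarrow> ('a \<Rightarrow> 'a \<Rightarrow> bool) \<Rightarrow> bool" where
  "type1 V E \<longleftrightarrow> finite_corner_rank V E \<and> corner_rank V E \<ge> 2 \<and>
     (\<exists>v\<in>rank_set E V (corner_rank V E). \<forall>w\<in>stage E V (corner_rank V E - 2). E v w)"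

definition type0 :: "'a set \<Rightarrow> ('a \<Rightarrow> 'a \<Rightarrow> bool) \<Rightarrow> bool" where
  "type0 V E \<longleftrightarrow> finite_corner_rank V E \<and> corner_rank V E \<ge> 2 \<and> \<not> type1 V E"

definition has_type :: "'a set \<Rightarrow> ('a \<Rightarrow> 'a \<Rightarrow> bool) \<Rightarrow> nat \<Rightarrow> bool" where
  "has_type V E r \<longleftrightarrow> (r = 1 \<and> type1 V E) \<or> (r = 0 \<and> type0 V E)"

definition rank_card_vector :: "'a set \<Rightarrow> ('a \<Rightarrow> 'a \<Rightarrow> bool) \<Rightarrow> nat list" where
  "rank_card_vector V E = map (\<lambda>k. card (rank_set E V k)) (rev [1..<corner_rank V E + 1])"

text \<open>Vertices are taken from nat; every finite graph is isomorphic to one on nat.\<close>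
definition realizable :: "nat \<Rightarrow> nat list \<Rightarrow> bool" where
  "realizable r xs \<longleftrightarrow> (\<exists>(V::nat set) E. is_graph V E \<and> finite_corner_rank V E
      \<and> has_type V E r \<and> rank_card_vector V E = xs)"

end

theory Submission
  imports Defs
begin

definition pull :: "('a \<Rightarrow> 'a \<Rightarrow> bool) \<Rightarrow> ('b \<Rightarrow> 'a) \<Rightarrow> 'b \<Rightarrow> 'b \<Rightarrow> bool" where
  "pull E f = (\<lambda>x y. E (f x) (f y))"

lemma pull_apply: "pull E f x y = E (f x) (f y)"
  by (simp add: pull_def)

lemma stage_sub: "stage E V k \<subseteq> V"
  by (induction k) auto

context
  fixes f :: "'b \<Rightarrow> 'a" and V :: "'a set" and V' :: "'b set" and E :: "'a \<Rightarrow> 'a \<Rightarrow> bool"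
  assumes surj: "f ` V' = V"
begin

lemma pre_sub_iff:
  assumes "A \<subseteq> V"
  shows "{y\<in>V'. f y \<in> A} \<subseteq> {y\<in>V'. f y \<in> B} \<longleftrightarrow> A \<subseteq> B"
proof
  assume h: "{y\<in>V'. f y \<in> A} \<subseteq> {y\<in>V'. f y \<in> B}"
  show "A \<subseteq> B"
  proof
    fix a assume "a \<in> A"
    then obtain y where "y \<in> V'" "f y = a" using assms surj by blast
    then show "a \<in> B" using h \<open>a \<in> A\<close> by blast
  qed
qed auto

lemma pre_psub_iff:
  assumes "A \<subseteq> V" "B \<subseteq> V"
  shows "{y\<in>V'. f y \<in> A} \<subset> {y\<in>V'. f y \<in> B} \<longleftrightarrow> A \<subset> B"
  using pre_sub_iff[OF assms(1), of B] pre_sub_iff[OF assms(2), of A]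
  by (auto simp: less_le_not_le)

lemma pre_empty_iff:
  assumes "A \<subseteq> V"
  shows "{y\<in>V'. f y \<in> A} = {} \<longleftrightarrow> A = {}"
  using assms surj by blast

lemma cnbh_pull:
  "cnbh (pull E f) {y\<in>V'. f y \<in> S} x = {y\<in>V'. f y \<in> cnbh E S (f x)}"
  unfolding cnbh_def by (auto simp: pull_apply)

lemma clique_pull:
  assumes "S \<subseteq> V"
  shows "is_clique (pull E f) {y\<in>V'. f y \<in> S} \<longleftrightarrow> is_clique E S"
proof
  assume h: "is_clique (pull E f) {y\<in>V'. f y \<in> S}"
  show "is_clique E S" unfolding is_clique_def
  proof (intro ballI)
    fix a b assume "a \<in> S" "b \<in> S"
    then obtain x y where "x \<in> V'" "f x = a" "y \<in> V'" "f y = b" using assms surj by blast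
    then show "E a b" using h \<open>a \<in> S\<close> \<open>b \<in> S\<close> unfolding is_clique_def by (force simp: pull_apply)
  qed
qed (auto simp: is_clique_def pull_apply)

lemma sc_pull:
  assumes "S \<subseteq> V"
  shows "strict_corner (pull E f) {y\<in>V'. f y \<in> S} x \<longleftrightarrow> x \<in> V' \<and> f x \<in> S \<and> strict_corner E S (f x)"
proof
  have nsub: "cnbh E S z \<subseteq> V" for z using assms unfolding cnbh_def by auto
  {
    assume h: "strict_corner (pull E f) {y\<in>V'. f y \<in> S} x"
    then obtain w where w: "w \<in> V'" "f w \<in> S" "w \<noteq> x"
      "cnbh (pull E f) {y\<in>V'. f y \<in> S} x \<subset> cnbh (pull E f) {y\<in>V'. f y \<in> S} w"
      unfolding strict_corner_def by auto
    then have ps: "cnbh E S (f x) \<subset> cnbh E S (f w)"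
      unfolding cnbh_pull using pre_psub_iff[OF nsub nsub] by blast
    then have "f w \<noteq> f x" by auto
    with ps w h show "x \<in> V' \<and> f x \<in> S \<and> strict_corner E S (f x)"
      unfolding strict_corner_def by auto
  }
  {
    assume h: "x \<in> V' \<and> f x \<in> S \<and> strict_corner E S (f x)"
    then obtain w where w: "w \<in> S" "w \<noteq> f x" "cnbh E S (f x) \<subset> cnbh E S w"
      unfolding strict_corner_def by auto
    then obtain w' where w': "w' \<in> V'" "f w' = w" using assms surj by blast
    then have "cnbh (pull E f) {y\<in>V'. f y \<in> S} x \<subset> cnbh (pull E f) {y\<in>V'. f y \<in> S} w'"
      unfolding cnbh_pull using pre_psub_iff[OF nsub nsub] w by auto
    then show "strict_corner (pull E f) {y\<in>V'. f y \<in> S} x"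
      unfolding strict_corner_def using h w w' by auto
  }
qed

lemma stage_pull: "stage (pull E f) V' k = {x\<in>V'. f x \<in> stage E V k}"
proof (induction k)
  case 0
  then show ?case using surj by auto
next
  case (Suc k)
  have sub: "stage E V k \<subseteq> V" by (rule stage_sub)
  show ?case
    using Suc clique_pull[OF sub] sc_pull[OF sub] by auto
qed

lemma rank_set_pull: "rank_set (pull E f) V' k = {x\<in>V'. f x \<in> rank_set E V k}"
  unfolding rank_set_def stage_pull
  using clique_pull[OF stage_sub] sc_pull[OF stage_sub] by auto

lemma rank_set_sub: "rank_set E V k \<subseteq> V"
  unfolding rank_set_def using stage_sub[of E V "k-1"] by auto

lemma fcr_pull: "finite_corner_rank V' (pull E f) \<longleftrightarrow> finite_corner_rank V E"
  unfolding finite_corner_rank_def stage_pull using pre_empty_iff[OF stage_sub] by auto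

lemma cr_pull: "corner_rank V' (pull E f) = corner_rank V E"
  unfolding corner_rank_def rank_set_pull using pre_empty_iff[OF rank_set_sub] by auto

lemma type1_pull: "type1 V' (pull E f) \<longleftrightarrow> type1 V E"
proof -
  let ?a = "corner_rank V E"
  have "(\<exists>v\<in>rank_set (pull E f) V' ?a. \<forall>w\<in>stage (pull E f) V' (?a - 2). pull E f v w)
     \<longleftrightarrow> (\<exists>v\<in>rank_set E V ?a. \<forall>w\<in>stage E V (?a - 2). E v w)"
  proof
    assume "\<exists>v\<in>rank_set (pull E f) V' ?a. \<forall>w\<in>stage (pull E f) V' (?a - 2). pull E f v w"
    then obtain v where v1: "v \<in> rank_set (pull E f) V' ?a"
      and v2: "\<forall>w\<in>stage (pull E f) V' (?a - 2). pull E f v w" by blast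
    have v: "v \<in> V'" "f v \<in> rank_set E V ?a" using v1 unfolding rank_set_pull by auto
    have "\<forall>w\<in>stage E V (?a - 2). E (f v) w"
    proof
      fix w assume w: "w \<in> stage E V (?a - 2)"
      then have "w \<in> f ` V'" using stage_sub[of E V "?a - 2"] surj by blast
      then obtain w' where w': "w' \<in> V'" "f w' = w" by blast
      then have "w' \<in> stage (pull E f) V' (?a - 2)" unfolding stage_pull using w by simp
      then have "pull E f v w'" using v2 by blast
      then show "E (f v) w" using w' by (simp add: pull_apply)
    qed
    then show "\<exists>v\<in>rank_set E V ?a. \<forall>w\<in>stage E V (?a - 2). E v w" using v by blast
  next
    assume "\<exists>v\<in>rank_set E V ?a. \<forall>w\<in>stage E V (?a - 2). E v w"
    then obtain v where v: "v \<in> rank_set E V ?a" "\<forall>w\<in>stage E V (?a - 2). E v w" by blast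
    have "v \<in> f ` V'" using v(1) rank_set_sub[of ?a] surj by auto
    then obtain v' where v': "v' \<in> V'" "f v' = v" by blast
    have "v' \<in> rank_set (pull E f) V' ?a" unfolding rank_set_pull using v v' by simp
    moreover have "\<forall>w\<in>stage (pull E f) V' (?a - 2). pull E f v' w"
      unfolding stage_pull using v v' by (simp add: pull_apply)
    ultimately show "\<exists>v\<in>rank_set (pull E f) V' ?a. \<forall>w\<in>stage (pull E f) V' (?a - 2). pull E f v w"
      by blast
  qed
  then show ?thesis unfolding type1_def fcr_pull cr_pull by simp
qed

lemma has_type_pull: "has_type V' (pull E f) r \<longleftrightarrow> has_type V E r"
  unfolding has_type_def type0_def type1_pull fcr_pull cr_pull by simp

lemma graph_pull: "is_graph V E \<Longrightarrow> finite V' \<Longrightarrow> is_graph V' (pull E f)"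
  unfolding is_graph_def using surj by (auto simp: pull_apply)

end


lemma stage_Suc_sub: "stage E V (Suc k) \<subseteq> stage E V k"
  by auto

lemma stage_mono: "m \<le> n \<Longrightarrow> stage E V n \<subseteq> stage E V m"
proof (induction n)
  case 0 then show ?case by simp
next
  case (Suc n)
  then show ?case using stage_Suc_sub[of E V n] by (cases "m = Suc n") auto
qed

lemma stuck: "stage E V (Suc k) = stage E V k \<Longrightarrow> stage E V (k + j) = stage E V k"
proof (induction j)
  case 0 then show ?case by simp
next
  case (Suc j)
  then show ?case by (simp del: stage.simps(2)) (simp only: stage.simps(2) Suc)
qed

lemma rank_nonempty_next:
  assumes "finite_corner_rank V E" "stage E V k \<noteq> {}"
  shows "rank_set E V (Suc k) \<noteq> {}"
proof
  assume h: "rank_set E V (Suc k) = {}"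
  have nc: "\<not> is_clique E (stage E V k)"
    using h assms(2) unfolding rank_set_def by auto
  have "stage E V (Suc k) = stage E V k"
    using h nc unfolding rank_set_def by auto
  then have "stage E V (k + j) \<noteq> {}" for j using stuck assms(2) by metis
  moreover obtain m where "stage E V m = {}" using assms(1) unfolding finite_corner_rank_def by auto
  moreover have "stage E V (k + m) \<subseteq> stage E V m" by (rule stage_mono) simp
  ultimately show False by blast
qed

lemma rank_not_stage: "v \<in> rank_set E V k \<Longrightarrow> v \<notin> stage E V k"
  unfolding rank_set_def by (cases k) auto

lemma rank_sub_stage: "rank_set E V k \<subseteq> stage E V (k - 1)"
  unfolding rank_set_def by auto

lemma rank_disj: assumes "v \<in> rank_set E V k" "v \<in> rank_set E V k'" shows "k = k'"
proof (rule ccontr)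
  assume "k \<noteq> k'"
  have nz: "k \<noteq> 0" "k' \<noteq> 0" using assms unfolding rank_set_def by (auto split: if_splits)
  { fix a b assume ab: "v \<in> rank_set E V a" "v \<in> rank_set E V b" "a < b"
    then have "v \<in> stage E V (b - 1)" using rank_sub_stage[of E V b] by blast
    moreover have "stage E V (b - 1) \<subseteq> stage E V a" by (rule stage_mono) (use ab in auto)
    ultimately have False using rank_not_stage[of v E V a] ab by blast }
  then show False using assms \<open>k \<noteq> k'\<close> by (metis linorder_neqE_nat)
qed

lemma ranks_finite:
  assumes "finite_corner_rank V E"
  shows "finite {k. rank_set E V k \<noteq> {}}"
proof -
  obtain m where m: "stage E V m = {}" using assms unfolding finite_corner_rank_def by auto
  have "{k. rank_set E V k \<noteq> {}} \<subseteq> {..m}"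
  proof
    fix k assume "k \<in> {k. rank_set E V k \<noteq> {}}"
    then have "stage E V (k - 1) \<noteq> {}" using rank_sub_stage[of E V k] by auto
    then have "\<not> m \<le> k - 1" using stage_mono[of m "k - 1" E V] m by auto
    then show "k \<in> {..m}" by simp
  qed
  then show ?thesis using finite_subset by blast
qed

lemma all_ranks_nonempty:
  assumes "finite_corner_rank V E" "V \<noteq> {}" "1 \<le> k" "k \<le> corner_rank V E"
  shows "rank_set E V k \<noteq> {}"
proof -
  let ?K = "{k. rank_set E V k \<noteq> {}}"
  have "rank_set E V 1 \<noteq> {}" using rank_nonempty_next[OF assms(1), of 0] assms(2) by simp
  then have "?K \<noteq> {}" by blast
  then have "corner_rank V E \<in> ?K"
    using Max_in[OF ranks_finite[OF assms(1)]] unfolding corner_rank_def by blast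
  then have "stage E V (corner_rank V E - 1) \<noteq> {}" using rank_sub_stage[of E V "corner_rank V E"] by auto
  moreover have "stage E V (corner_rank V E - 1) \<subseteq> stage E V (k - 1)"
    by (rule stage_mono) (use assms in auto)
  ultimately have "stage E V (k - 1) \<noteq> {}" by blast
  from rank_nonempty_next[OF assms(1) this] show ?thesis using assms(3) by simp
qed

lemma rcv_length: "length (rank_card_vector V E) = corner_rank V E"
  unfolding rank_card_vector_def by simp

lemma rcv_nth: "j < corner_rank V E \<Longrightarrow>
   rank_card_vector V E ! j = card (rank_set E V (corner_rank V E - j))"
proof -
  assume j: "j < corner_rank V E"
  have "rev [1..<corner_rank V E + 1] ! j = corner_rank V E - j"
    using j by (simp add: rev_nth del: upt_Suc)
  moreover have L: "j < length (rev [1..<corner_rank V E + 1])" using j by simp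
  ultimately show ?thesis unfolding rank_card_vector_def nth_map[OF L] by (simp only:)
qed

lemma one_step:
  fixes V :: "nat set"
  assumes g: "is_graph V E" and fcr: "finite_corner_rank V E" and ht: "has_type V E r"
    and i: "i < length (rank_card_vector V E)"
  shows "realizable r ((rank_card_vector V E)[i := Suc (rank_card_vector V E ! i)])"
proof -
  let ?a = "corner_rank V E"
  let ?xs = "rank_card_vector V E"
  have la: "length ?xs = ?a" by (rule rcv_length)
  define k where "k = ?a - i"
  have k: "1 \<le> k" "k \<le> ?a" using i la unfolding k_def by auto
  have fin: "finite V" "V \<noteq> {}" using g unfolding is_graph_def by auto
  obtain v where v: "v \<in> rank_set E V k" using all_ranks_nonempty[OF fcr fin(2) k] by blast
  have vV: "v \<in> V" using v rank_set_sub[of "\<lambda>x. x" V V E] by auto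
  obtain n where n: "n \<notin> V" using fin(1) by (meson ex_new_if_finite infinite_UNIV_nat)
  define f where "f = (\<lambda>x. if x = n then v else x)"
  define V' where "V' = insert n V"
  have surj: "f ` V' = V" unfolding f_def V'_def using vV n by auto
  have g': "is_graph V' (pull E f)" using graph_pull[OF surj g] fin unfolding V'_def by simp
  have fcr': "finite_corner_rank V' (pull E f)" using fcr_pull[OF surj] fcr by simp
  have ht': "has_type V' (pull E f) r" using has_type_pull[OF surj] ht by simp
  have cr': "corner_rank V' (pull E f) = ?a" by (rule cr_pull[OF surj])
  have card': "card (rank_set (pull E f) V' k') = card (rank_set E V k') + (if k' = k then 1 else 0)"
    for k'
  proof -
    let ?R = "rank_set E V k'"
    have RV: "?R \<subseteq> V" using rank_set_sub[of "\<lambda>x. x" V V E] by auto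
    have eq0: "rank_set (pull E f) V' k' = {x\<in>V'. f x \<in> ?R}" by (rule rank_set_pull[OF surj])
    have eq1: "{x\<in>V'. f x \<in> ?R} = (if v \<in> ?R then insert n ?R else ?R)"
      unfolding V'_def f_def using RV n by auto
    note eq = eq0[unfolded eq1]
    have "v \<in> ?R \<longleftrightarrow> k' = k" using rank_disj[OF v] v by blast
    moreover have "finite ?R" using RV fin finite_subset by blast
    moreover have "n \<notin> ?R" using RV n by blast
    ultimately show ?thesis unfolding eq by auto
  qed
  have "rank_card_vector V' (pull E f) = ?xs[i := Suc (?xs ! i)]"
  proof (rule nth_equalityI)
    show "length (rank_card_vector V' (pull E f)) = length (?xs[i := Suc (?xs ! i)])"
      using rcv_length[of V' "pull E f"] cr' la by simp
  next
    fix j assume "j < length (rank_card_vector V' (pull E f))"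
    then have j: "j < ?a" using rcv_length[of V' "pull E f"] cr' by simp
    have "rank_card_vector V' (pull E f) ! j = card (rank_set E V (?a - j)) + (if ?a - j = k then 1 else 0)"
      using rcv_nth[of j V' "pull E f"] j cr' card' by simp
    moreover have "(?a - j = k) \<longleftrightarrow> j = i" using j i la k_def by auto
    ultimately show "rank_card_vector V' (pull E f) ! j = (?xs[i := Suc (?xs ! i)]) ! j"
      using rcv_nth[of j V E] rcv_nth[of i V E] j i la by auto
  qed
  then show ?thesis unfolding realizable_def using g' fcr' ht' by blast
qed

lemma one_step':
  assumes "realizable r xs" "i < length xs"
  shows "realizable r (xs[i := Suc (xs ! i)])"
  using assms one_step unfolding realizable_def by blast

lemma main_ind:
  "\<forall>xs. realizable r xs \<and> length ys = length xs \<and> (\<forall>i < length xs. xs ! i \<le> ys ! i)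
     \<and> (\<Sum>i<length ys. ys ! i - xs ! i) = d \<longrightarrow> realizable r ys"
proof (induction d)
  case 0
  show ?case
  proof (intro allI impI)
    fix xs assume h: "realizable r xs \<and> length ys = length xs \<and> (\<forall>i < length xs. xs ! i \<le> ys ! i)
     \<and> (\<Sum>i<length ys. ys ! i - xs ! i) = 0"
    then have "ys = xs" by (intro nth_equalityI) (auto simp: sum_eq_0_iff intro!: le_antisym)
    then show "realizable r ys" using h by simp
  qed
next
  case (Suc d)
  show ?case
  proof (intro allI impI)
    fix xs assume h: "realizable r xs \<and> length ys = length xs \<and> (\<forall>i < length xs. xs ! i \<le> ys ! i)
     \<and> (\<Sum>i<length ys. ys ! i - xs ! i) = Suc d"
    have "\<exists>i<length ys. ys ! i - xs ! i \<noteq> 0"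
    proof (rule ccontr)
      assume "\<not> (\<exists>i<length ys. ys ! i - xs ! i \<noteq> 0)"
      then have "(\<Sum>i<length ys. ys ! i - xs ! i) = (\<Sum>i<length ys. 0)"
        by (intro sum.cong) auto
      then have s0: "(\<Sum>i<length ys. ys ! i - xs ! i) = 0" by simp
      have "(\<Sum>i<length ys. ys ! i - xs ! i) = Suc d" using h by blast
      with s0 show False by linarith
    qed
    then obtain i where i: "i < length ys" "ys ! i - xs ! i \<noteq> 0" by blast
    define xs' where "xs' = xs[i := Suc (xs ! i)]"
    have r': "realizable r xs'" unfolding xs'_def using one_step'[of r xs i] h i by simp
    have l': "length ys = length xs'" using h unfolding xs'_def by simp
    have le': "\<forall>j < length xs'. xs' ! j \<le> ys ! j" using h i unfolding xs'_def
      by (auto simp: nth_list_update)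
    have "(\<Sum>j<length ys. ys ! j - xs ! j) = (\<Sum>j<length ys. ys ! j - xs' ! j) + 1"
    proof -
      have "(\<Sum>j<length ys. ys ! j - xs ! j) = (\<Sum>j<length ys. (ys ! j - xs' ! j) + (if j = i then 1 else 0))"
        using h i unfolding xs'_def by (intro sum.cong) (auto simp: nth_list_update)
      also have "\<dots> = (\<Sum>j<length ys. ys ! j - xs' ! j) + 1"
        using i by (simp add: sum.distrib)
      finally show ?thesis .
    qed
    moreover have "(\<Sum>i<length ys. ys ! i - xs ! i) = Suc d" using h by blast
    ultimately have "(\<Sum>j<length ys. ys ! j - xs' ! j) = d" by linarith
    then show "realizable r ys" using Suc.IH r' l' le' by blast
  qed
qed

theorem lemma3p6:
  fixes r :: nat and xs ys :: "nat list"
  assumes "r \<in> {0, 1}"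
    and "realizable r xs"
    and "length ys = length xs"
    and "\<forall>i < length xs. xs ! i \<le> ys ! i"
  shows "realizable r ys"
  using main_ind[where d="\<Sum>i<length ys. ys ! i - xs ! i" and r=r and ys=ys] assms by blast

end
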